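(* Let $\Lambda=\operatorname{diag}(\lambda_1,\dots,\lambda_n)$, $\bar\mu\in\mathbb{R}^n$, let $\mathcal{C}$ be a constant positive definite $n\times n$ matrix, and take $a(x)=\Lambda(\bar\mu-x)$ on $\mathcal{U}=\mathbb{R}^n$ (multivariate Ornstein–Uhlenbeck model), with $\kappa\neq-1$ a real constant. Then there is $T_0>0$ such that for $T\le T_0$ the Hamilton–Jacobi equation $$\partial_tS^0+\tfrac{\kappa+1}{2}(\nabla S^0)^T\mathcal{C}\nabla S^0+(\kappa+1)a^T\nabla S^0+\tfrac{\kappa}{2}a^T\mathcal{C}^{-1}a=0,\qquad S^0(T,\cdot)=0,$$ has a solution $S^0(t,x)$ that is a quadratic polynomial in $x$ with $t$-dependent coefficients, and setting $S^1(t)=\frac12\int_t^T\operatorname{tr}\big(\mathcal{C}\nabla^2S^0(s,\cdot)\big)ds$ (which is independent of $x$), the function $S=S^0+S^1$ solves exactly $$\partial_tS+(\kappa+1)a^T\nabla S+\tfrac{\kappa+1}{2}(\nabla S)^T\mathcal{C}\nabla S+\tfrac{\kappa}{2}a^T\mathcal{C}^{-1}a+\tfrac12\operatorname{tr}(\mathcal{C}\nabla^2S)=0,\qquad S(T,\cdot)=0.$$ Consequently all higher WKB corrections $S^j$, $j\ge2$, vanish and the optimal control is $\varphi^*=\frac{1}{A_U(w)}\big(\mathcal{C}^{-1}\Lambda(\bar\mu-x)+\nabla S^0(t,x)\big)$.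
   Context: $\Gamma=e^{S}$ is the function in the representation $J(t,x,w)=\Gamma(t,x)U(w)$ of the value function; $A_U(w)=-U''(w)/U'(w)$; $\nabla,\nabla^2$ are gradient and Hessian in $x$. *)

theory Defs
  imports "HOL-Analysis.Analysis"
begin

definition diag_mat :: "real^'n \<Rightarrow> real^'n^'n" where
  "diag_mat l = (\<chi> i j. if i = j then l $ i else 0)"

definition pos_def_mat :: "real^'n^'n \<Rightarrow> bool" where
  "pos_def_mat C \<longleftrightarrow> transpose C = C \<and> (\<forall>v. v \<noteq> 0 \<longrightarrow> v \<bullet> (C *v v) > 0)"

definition grad :: "(real^'n \<Rightarrow> real) \<Rightarrow> real^'n \<Rightarrow> real^'n" where
  "grad f x = (\<chi> i. deriv (\<lambda>h. f (x + h *\<^sub>R axis i 1)) 0)"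

definition hess :: "(real^'n \<Rightarrow> real) \<Rightarrow> real^'n \<Rightarrow> real^'n^'n" where
  "hess f x = (\<chi> i j. deriv (\<lambda>h. grad f (x + h *\<^sub>R axis j 1) $ i) 0)"

definition dt :: "real \<Rightarrow> (real \<Rightarrow> real^'n \<Rightarrow> real) \<Rightarrow> real \<Rightarrow> real^'n \<Rightarrow> real" where
  "dt T f t x = vector_derivative (\<lambda>s. f s x) (at t within {0..T})"

end

theory Submission
  imports Defs
begin


lemma picard:
  fixes g :: "'a::banach \<Rightarrow> 'a"
  assumes K: "K \<ge> 0"
    and lip: "\<And>x y. norm x \<le> 1 \<Longrightarrow> norm y \<le> 1 \<Longrightarrow> norm (g x - g y) \<le> K * norm (x - y)"
    and M: "\<And>x. norm x \<le> 1 \<Longrightarrow> norm (g x) \<le> M"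
  shows "\<exists>\<delta>>0. \<exists>u. u 0 = 0 \<and> (\<forall>s\<in>{0..\<delta>}. (u has_vector_derivative g (u s)) (at s within {0..\<delta>}))"
proof -
  have M0: "M \<ge> 0" using M[of 0] by (smt (verit) norm_ge_zero norm_zero)
  define \<delta> where "\<delta> = 1 / (2 * (K + M + 1))"
  have d0: "\<delta> > 0" using K M0 by (simp add: \<delta>_def)
  have dK: "\<delta> * K \<le> 1/2" and dM: "\<delta> * M \<le> 1/2"
    using K M0 by (simp_all add: \<delta>_def field_simps)
  define cl where "cl s = max 0 (min \<delta> s)" for s
  have cl_in: "cl s \<in> {0..\<delta>}" for s using d0 by (auto simp: cl_def)
  have cl_id: "s \<in> {0..\<delta>} \<Longrightarrow> cl s = s" for s by (auto simp: cl_def)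
  have cl_cont: "continuous_on UNIV cl" unfolding cl_def by (intro continuous_intros)
  have gcont: "continuous_on (cball 0 1) g"
  proof (rule lipschitz_on_continuous_on)
    show "K-lipschitz_on (cball 0 1) g"
      by (rule lipschitz_onI) (use lip K in \<open>auto simp: dist_norm\<close>)
  qed
  define S where "S = PiC (UNIV::real set) (\<lambda>_. cball (0::'a) 1)"
  have memS: "u \<in> S \<longleftrightarrow> (\<forall>s. norm (apply_bcontfun u s) \<le> 1)" for u
    by (auto simp: S_def mem_PiC_iff)
  have Scl: "closed S" unfolding S_def by (rule closed_PiC) auto
  have Scomp: "complete S" using Scl complete_eq_closed by blast
  have Sne: "S \<noteq> {}" using memS[of 0] by auto
  have hcont: "continuous_on {0..\<delta>} (\<lambda>r. g (apply_bcontfun u r))" if "u \<in> S" for u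
    by (rule continuous_on_compose2[OF gcont]) (use that memS in auto)
  define F where "F u = (\<lambda>s. integral {0..cl s} (\<lambda>r. g (apply_bcontfun u r)))" for u
  have Fcont: "continuous_on UNIV (F u)" if "u \<in> S" for u
  proof -
    have "continuous_on {0..\<delta>} (\<lambda>s. integral {0..s} (\<lambda>r. g (apply_bcontfun u r)))"
      by (rule indefinite_integral_continuous_1, rule integrable_continuous_real, rule hcont[OF that])
    then show ?thesis unfolding F_def
      by (rule continuous_on_compose2[OF _ cl_cont]) (use cl_in in auto)
  qed
  have Fbnd: "norm (F u s) \<le> 1/2" if "u \<in> S" for u s
  proof -
    have "norm (F u s) \<le> M * (cl s - 0)" unfolding F_def
    proof (rule integral_bound)
      show "0 \<le> cl s" using cl_in by auto
      show "continuous_on {0..cl s} (\<lambda>r. g (apply_bcontfun u r))"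
        by (rule continuous_on_subset[OF hcont[OF that]]) (use cl_in in auto)
      show "norm (g (apply_bcontfun u t)) \<le> M" for t using M that memS by blast
    qed
    also have "\<dots> \<le> M * \<delta>" using cl_in[of s] M0 by (auto intro: mult_left_mono)
    finally show ?thesis using dM by (simp add: mult.commute)
  qed
  have Fbc: "F u \<in> bcontfun" if "u \<in> S" for u
    by (rule bcontfun_normI[OF Fcont[OF that] Fbnd[OF that]])
  define \<Phi> where "\<Phi> u = (Bcontfun (F u) :: real \<Rightarrow>\<^sub>C 'a)" for u
  have Phi_ap: "apply_bcontfun (\<Phi> u) = F u" if "u \<in> S" for u
    unfolding \<Phi>_def using Fbc[OF that] by (simp add: Bcontfun_inverse)
  have PhiS: "\<Phi> ` S \<subseteq> S"
  proof
    fix w assume "w \<in> \<Phi> ` S"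
    then obtain u where u: "u \<in> S" and w: "w = \<Phi> u" by blast
    have "norm (apply_bcontfun w s) \<le> 1" for s
      using Fbnd[OF u, of s] Phi_ap[OF u] w by simp
    then show "w \<in> S" using memS by blast
  qed
  have contr: "dist (\<Phi> u) (\<Phi> v) \<le> 1/2 * dist u v" if "u \<in> S" "v \<in> S" for u v
  proof (rule dist_bound)
    fix s
    have "F u s - F v s = integral {0..cl s} (\<lambda>r. g (apply_bcontfun u r) - g (apply_bcontfun v r))"
      unfolding F_def
      by (rule integral_diff[symmetric]; rule integrable_continuous_real;
          rule continuous_on_subset[OF hcont]) (use that cl_in in auto)
    also have "norm \<dots> \<le> (K * dist u v) * (cl s - 0)"
    proof (rule integral_bound)
      show "0 \<le> cl s" using cl_in by auto
      show "continuous_on {0..cl s} (\<lambda>r. g (apply_bcontfun u r) - g (apply_bcontfun v r))"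
        by (intro continuous_intros; rule continuous_on_subset[OF hcont]) (use that cl_in in auto)
      fix r
      have "norm (g (apply_bcontfun u r) - g (apply_bcontfun v r)) \<le> K * norm (apply_bcontfun u r - apply_bcontfun v r)"
        using lip that memS by blast
      also have "\<dots> \<le> K * dist u v"
        using dist_bounded[of u r v] K by (simp add: dist_norm mult_left_mono)
      finally show "norm (g (apply_bcontfun u r) - g (apply_bcontfun v r)) \<le> K * dist u v" .
    qed
    also have "\<dots> \<le> (K * dist u v) * \<delta>"
      using cl_in[of s] K by (auto intro!: mult_left_mono)
    also have "\<dots> \<le> 1/2 * dist u v"
      using dK by (smt (verit) mult.commute mult.left_commute mult_right_mono zero_le_dist)
    finally show "dist (\<Phi> u s) (\<Phi> v s) \<le> 1/2 * dist u v"
      using Phi_ap that by (simp add: dist_norm)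
  qed
  obtain u where uS: "u \<in> S" and fx: "\<Phi> u = u"
    using Banach_fix[OF Scomp Sne _ _ PhiS contr] by auto
  have ueq: "apply_bcontfun u s = integral {0..s} (\<lambda>r. g (apply_bcontfun u r))" if "s \<in> {0..\<delta>}" for s
    using Phi_ap[OF uS] fx cl_id[OF that] by (metis F_def)
  show ?thesis
  proof (intro exI conjI ballI)
    show "\<delta> > 0" by (rule d0)
    show "apply_bcontfun u 0 = 0" using ueq[of 0] d0 by simp
    fix s assume s: "s \<in> {0..\<delta>}"
    show "(apply_bcontfun u has_vector_derivative g (apply_bcontfun u s)) (at s within {0..\<delta>})"
      by (rule has_vector_derivative_transform[OF s _ integral_has_vector_derivative[OF hcont[OF uS] s]])
         (use ueq in auto)
  qed
qed



lemma tr_inner: "inner (transpose A *v y) z = inner y ((A::real^'n^'m) *v z)"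
  by (simp add: dot_lmul_matrix)

lemma mv_inner_left: "inner (A *v y) z = inner y (transpose (A::real^'n^'m) *v z)"
  using tr_inner[of "transpose A"] by simp

lemma hj_id:
  fixes G C L Ci :: "real^'n^'n" and x b m :: "real^'n" and \<alpha> \<kappa> :: real
  shows "inner x ((- ((\<alpha>/2) *\<^sub>R (transpose G ** C ** G) - \<alpha> *\<^sub>R (transpose L ** G)
                 + (\<kappa>/2) *\<^sub>R (transpose L ** Ci ** L))) *v x)
   + inner (- ((\<alpha>/2) *\<^sub>R (transpose G *v (C *v b) + transpose G *v (transpose C *v b))
               + \<alpha> *\<^sub>R (transpose G *v m - transpose L *v b)
               - (\<kappa>/2) *\<^sub>R (transpose L *v (transpose Ci *v m) + transpose L *v (Ci *v m)))) x
   + (- ((\<alpha>/2) * inner b (C *v b) + \<alpha> * inner m b + (\<kappa>/2) * inner m (Ci *v m)))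
   + (\<alpha>/2) * inner (G *v x + b) (C *v (G *v x + b)) + \<alpha> * inner (m - L *v x) (G *v x + b)
   + (\<kappa>/2) * inner (m - L *v x) (Ci *v (m - L *v x)) = 0"
proof -
  define p where "p = G *v x"
  define q where "q = L *v x"
  have e1: "inner x ((transpose G ** C ** G) *v x) = inner p (C *v p)"
    by (simp add: p_def matrix_vector_mul_assoc[symmetric] tr_inner mv_inner_left del: transpose_matrix_vector)
  have e2: "inner x ((transpose L ** G) *v x) = inner q p"
    by (simp add: p_def q_def matrix_vector_mul_assoc[symmetric] tr_inner mv_inner_left del: transpose_matrix_vector)
  have e3: "inner x ((transpose L ** Ci ** L) *v x) = inner q (Ci *v q)"
    by (simp add: q_def matrix_vector_mul_assoc[symmetric] tr_inner mv_inner_left del: transpose_matrix_vector)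
  have e4: "inner (transpose G *v v) x = inner v p" for v
    by (simp add: p_def dot_lmul_matrix)
  have e5: "inner (transpose L *v v) x = inner v q" for v
    by (simp add: q_def dot_lmul_matrix)
  have e6: "inner (transpose C *v b) p = inner b (C *v p)"
    by (simp add: dot_lmul_matrix)
  have e7: "inner (transpose Ci *v m) q = inner m (Ci *v q)"
    by (simp add: dot_lmul_matrix)
  have f4: "inner x (transpose G *v v) = inner v p" for v
    using e4[of v] by (simp only: inner_commute)
  have f5: "inner x (transpose L *v v) = inner v q" for v
    using e5[of v] by (simp only: inner_commute)
  have f7: "inner x (transpose L *v (transpose Ci *v m)) = inner m (Ci *v q)"
    using e5 e7 by (metis inner_commute)
  have f6: "inner x (transpose G *v (transpose C *v b)) = inner b (C *v p)"
    using e4 e6 by (metis inner_commute)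
  have g6: "inner p (transpose C *v b) = inner b (C *v p)"
    using e6 by (metis inner_commute)
  have g7: "inner q (transpose Ci *v m) = inner m (Ci *v q)"
    using e7 by (metis inner_commute)
  show ?thesis
    unfolding p_def[symmetric] q_def[symmetric]
    by (simp add: algebra_simps inner_add_left inner_add_right inner_diff_left inner_diff_right
        inner_minus_left e1 e2 e3 e4 e5 e6 e7 f4 f5 f6 f7 g6 g7 matrix_vector_mult_add_rdistrib
        matrix_vector_mult_diff_rdistrib scaleR_matrix_vector_assoc[symmetric] inner_commute del: transpose_matrix_vector)
qed



lemma grad_quad:
  fixes Q :: "real^'n^'n" and b x :: "real^'n" and c :: real
  shows "grad (\<lambda>x. inner x (Q *v x) + inner b x + c) x = (Q + transpose Q) *v x + b"
proof -
  have "deriv (\<lambda>h. inner (x + h *\<^sub>R axis i 1) (Q *v (x + h *\<^sub>R axis i 1)) + inner b (x + h *\<^sub>R axis i 1) + c) 0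
        = ((Q + transpose Q) *v x + b) $ i" for i
  proof -
    define e :: "real^'n" where "e = axis i 1"
    have fe: "(\<lambda>h. inner (x + h *\<^sub>R e) (Q *v (x + h *\<^sub>R e)) + inner b (x + h *\<^sub>R e) + c)
       = (\<lambda>h. (inner x (Q *v x) + inner b x + c) + h * (inner e (Q *v x) + inner x (Q *v e) + inner b e)
              + h^2 * inner e (Q *v e))"
      by (rule ext) (simp add: algebra_simps inner_add_left inner_add_right matrix_vector_right_distrib
          power2_eq_square)
    have "((\<lambda>h. (inner x (Q *v x) + inner b x + c) + h * (inner e (Q *v x) + inner x (Q *v e) + inner b e)
              + h^2 * inner e (Q *v e)) has_real_derivative (inner e (Q *v x) + inner x (Q *v e) + inner b e)) (at 0)"
      by (auto intro!: derivative_eq_intros)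
    then have "deriv (\<lambda>h. inner (x + h *\<^sub>R e) (Q *v (x + h *\<^sub>R e)) + inner b (x + h *\<^sub>R e) + c) 0
        = inner e (Q *v x) + inner x (Q *v e) + inner b e"
      unfolding fe by (rule DERIV_imp_deriv)
    also have "\<dots> = ((Q + transpose Q) *v x + b) $ i"
    proof -
      have "inner x (Q *v e) = inner e (transpose Q *v x)"
        by (metis inner_commute mv_inner_left)
      then show ?thesis
        by (simp add: e_def inner_axis' inner_axis matrix_vector_mult_add_rdistrib del: transpose_matrix_vector)
    qed
    finally show ?thesis unfolding e_def .
  qed
  then show ?thesis unfolding grad_def by (simp add: vec_eq_iff)
qed

lemma hess_quad:
  fixes Q :: "real^'n^'n" and b x :: "real^'n" and c :: real
  shows "hess (\<lambda>x. inner x (Q *v x) + inner b x + c) x = Q + transpose Q"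
proof -
  define G where "G = Q + transpose Q"
  have "deriv (\<lambda>h. (G *v (x + h *\<^sub>R axis j 1) + b) $ i) 0 = G $ i $ j" for i j
  proof -
    have fe: "(\<lambda>h. (G *v (x + h *\<^sub>R axis j 1) + b) $ i) = (\<lambda>h. (G *v x + b) $ i + h * G $ i $ j)"
      by (rule ext) (simp add: matrix_vector_right_distrib matrix_vector_mult_basis
          matrix_vector_mult_scaleR column_def del: transpose_matrix_vector)
    have "((\<lambda>h. (G *v x + b) $ i + h * G $ i $ j) has_real_derivative G $ i $ j) (at 0)"
      by (auto intro!: derivative_eq_intros)
    then show ?thesis unfolding fe by (rule DERIV_imp_deriv)
  qed
  then show ?thesis unfolding hess_def grad_quad G_def[symmetric] by (simp add: vec_eq_iff)
qed



lemma quad_lip: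
  fixes A :: "'a::euclidean_space \<Rightarrow> 'a" and B :: "'a \<Rightarrow> 'a \<Rightarrow> 'a" and g0 :: 'a
  assumes A: "bounded_linear A" and B: "bounded_bilinear B"
  shows "\<exists>K M. K \<ge> 0 \<and> (\<forall>x y. norm x \<le> 1 \<longrightarrow> norm y \<le> 1 \<longrightarrow>
            norm ((g0 + A x + B x x) - (g0 + A y + B y y)) \<le> K * norm (x - y))
          \<and> (\<forall>x. norm x \<le> 1 \<longrightarrow> norm (g0 + A x + B x x) \<le> M)"
proof -
  obtain KA where KA: "KA > 0" "\<And>x. norm (A x) \<le> norm x * KA"
    using bounded_linear.pos_bounded[OF A] by blast
  obtain KB where KB: "KB > 0" "\<And>x y. norm (B x y) \<le> norm x * norm y * KB"
    using bounded_bilinear.pos_bounded[OF B] by blast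
  show ?thesis
  proof (intro exI conjI allI impI)
    show "0 \<le> KA + 2 * KB" using KA KB by simp
    fix x y :: 'a assume x: "norm x \<le> 1" and y: "norm y \<le> 1"
    have eq: "(g0 + A x + B x x) - (g0 + A y + B y y) = A (x - y) + B (x - y) x + B y (x - y)"
      by (simp add: linear_diff[OF bounded_linear.linear[OF A]] bounded_bilinear.diff_left[OF B]
          bounded_bilinear.diff_right[OF B] algebra_simps)
    have n1: "norm (A (x - y)) \<le> KA * norm (x - y)" using KA(2)[of "x - y"] by (simp add: mult.commute)
    have n2: "norm (B (x - y) x) \<le> KB * norm (x - y)"
    proof -
      have "norm (B (x - y) x) \<le> norm (x - y) * norm x * KB" by (rule KB(2))
      also have "\<dots> \<le> norm (x - y) * 1 * KB"
        using x KB(1) by (intro mult_right_mono mult_left_mono) auto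
      finally show ?thesis by (simp add: mult.commute)
    qed
    have n3: "norm (B y (x - y)) \<le> KB * norm (x - y)"
    proof -
      have "norm (B y (x - y)) \<le> norm y * norm (x - y) * KB" by (rule KB(2))
      also have "\<dots> \<le> 1 * norm (x - y) * KB"
        using y KB(1) by (intro mult_right_mono mult_left_mono) auto
      finally show ?thesis by (simp add: mult.commute)
    qed
    have "norm (A (x - y) + B (x - y) x + B y (x - y)) \<le> norm (A (x - y)) + norm (B (x - y) x) + norm (B y (x - y))"
      by (meson norm_triangle_le order_refl add_mono)
    then show "norm ((g0 + A x + B x x) - (g0 + A y + B y y)) \<le> (KA + 2 * KB) * norm (x - y)"
      unfolding eq using n1 n2 n3 by (simp add: algebra_simps)
  next
    fix x :: 'a assume x: "norm x \<le> 1"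
    have n1: "norm (A x) \<le> KA" using KA(2)[of x] x KA(1) by (smt (verit) mult_right_mono mult_left_le_one_le norm_ge_zero)
    have n2: "norm (B x x) \<le> KB"
    proof -
      have "norm (B x x) \<le> norm x * norm x * KB" by (rule KB(2))
      also have "\<dots> \<le> 1 * 1 * KB" using x KB(1) by (intro mult_right_mono mult_mono) auto
      finally show ?thesis by simp
    qed
    have "norm (g0 + A x + B x x) \<le> norm g0 + norm (A x) + norm (B x x)"
      by (meson norm_triangle_le order_refl add_mono)
    then show "norm (g0 + A x + B x x) \<le> norm g0 + KA + KB" using n1 n2 by simp
  qed
qed



lemma tr_add: "transpose (A + B) = transpose A + transpose (B::real^'n^'m)"
  by (simp add: transpose_def vec_eq_iff)
lemma mm_add_l: "((A::real^'n^'m) + B) ** C = A ** C + B ** (C::real^'k^'n)"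
  by (simp add: matrix_matrix_mult_def vec_eq_iff sum.distrib algebra_simps)
lemma mm_add_r: "(A::real^'n^'m) ** (B + C) = A ** B + A ** (C::real^'k^'n)"
  by (simp add: matrix_matrix_mult_def vec_eq_iff sum.distrib algebra_simps)
lemma mm_scale_l: "((r *\<^sub>R A)::real^'n^'m) ** (C::real^'k^'n) = r *\<^sub>R (A ** C)"
  by (simp add: matrix_matrix_mult_def vec_eq_iff sum_distrib_left algebra_simps)
lemma mm_scale_r: "(A::real^'n^'m) ** (r *\<^sub>R C::real^'k^'n) = r *\<^sub>R (A ** C)"
  by (simp add: matrix_matrix_mult_def vec_eq_iff sum_distrib_left algebra_simps)
lemma mv_scale_l: "(r *\<^sub>R A::real^'n^'m) *v x = r *\<^sub>R (A *v x)"
  by (simp add: scaleR_matrix_vector_assoc)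

lemmas mat_lin = tr_add transpose_scalar mm_add_l mm_add_r mm_scale_l mm_scale_r mv_scale_l
  matrix_vector_mult_add_rdistrib matrix_vector_right_distrib matrix_vector_mult_scaleR



theorem mainTheorem5:
  fixes lam mubar :: "real^'n" and C :: "real^'n^'n" and \<kappa> :: real
  assumes posC: "pos_def_mat C"
    and kappa: "\<kappa> \<noteq> -1"
  defines "a \<equiv> (\<lambda>x. diag_mat lam *v (mubar - x))"
  shows "\<exists>T0>0. \<forall>T. 0 < T \<and> T \<le> T0 \<longrightarrow>
    (\<exists>(Q :: real \<Rightarrow> real^'n^'n) (b :: real \<Rightarrow> real^'n) (c :: real \<Rightarrow> real).
       (\<forall>t\<in>{0..T}. Q differentiable (at t within {0..T}) \<and>
                    b differentiable (at t within {0..T}) \<and>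
                    c differentiable (at t within {0..T})) \<and>
       (let S0 = (\<lambda>t x. x \<bullet> (Q t *v x) + b t \<bullet> x + c t);
            S1 = (\<lambda>t x. (1/2) * integral {t..T} (\<lambda>s. trace (C ** hess (S0 s) x)));
            S = (\<lambda>t x. S0 t x + S1 t x)
        in (\<forall>t\<in>{0..T}. \<forall>x.
              dt T S0 t x + ((\<kappa> + 1) / 2) * (grad (S0 t) x \<bullet> (C *v grad (S0 t) x))
              + (\<kappa> + 1) * (a x \<bullet> grad (S0 t) x)
              + (\<kappa> / 2) * (a x \<bullet> (matrix_inv C *v a x)) = 0)
         \<and> (\<forall>x. S0 T x = 0)
         \<and> (\<forall>t\<in>{0..T}. \<forall>x y. S1 t x = S1 t y)
         \<and> (\<forall>t\<in>{0..T}. \<forall>x.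
              dt T S t x + (\<kappa> + 1) * (a x \<bullet> grad (S t) x)
              + ((\<kappa> + 1) / 2) * (grad (S t) x \<bullet> (C *v grad (S t) x))
              + (\<kappa> / 2) * (a x \<bullet> (matrix_inv C *v a x))
              + (1/2) * trace (C ** hess (S t) x) = 0)
         \<and> (\<forall>x. S T x = 0)))"
proof -
  define \<alpha> where "\<alpha> = \<kappa> + 1"
  define L where "L = diag_mat lam"
  define Ci where "Ci = matrix_inv C"
  define m where "m = L *v mubar"
  define GG :: "real^'n^'n \<Rightarrow> real^'n^'n" where "GG Q = Q + transpose Q" for Q
  define M0 where "M0 = transpose L ** Ci ** L"
  define w0 where "w0 = transpose L *v (transpose Ci *v m) + transpose L *v (Ci *v m)"
  define g0 :: "(real^'n^'n) \<times> (real^'n) \<times> real" where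
    "g0 = ((\<kappa>/2) *\<^sub>R M0, - ((\<kappa>/2) *\<^sub>R w0), (\<kappa>/2) * inner m (Ci *v m))"
  define A :: "(real^'n^'n) \<times> (real^'n) \<times> real \<Rightarrow> (real^'n^'n) \<times> (real^'n) \<times> real" where
    "A z = (- (\<alpha> *\<^sub>R (transpose L ** GG (fst z))),
            \<alpha> *\<^sub>R (transpose (GG (fst z)) *v m - transpose L *v fst (snd z)),
            \<alpha> * inner m (fst (snd z)))" for z
  define B :: "(real^'n^'n) \<times> (real^'n) \<times> real \<Rightarrow> (real^'n^'n) \<times> (real^'n) \<times> real \<Rightarrow> (real^'n^'n) \<times> (real^'n) \<times> real" where
    "B z w = ((\<alpha>/2) *\<^sub>R (transpose (GG (fst z)) ** C ** GG (fst w)),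
              (\<alpha>/2) *\<^sub>R (transpose (GG (fst z)) *v (C *v fst (snd w))
                         + transpose (GG (fst z)) *v (transpose C *v fst (snd w))),
              (\<alpha>/2) * inner (fst (snd z)) (C *v fst (snd w)))" for z w
  define g where "g z = g0 + A z + B z z" for z
  have GG_add: "GG (P + R) = GG P + GG R" for P R by (simp add: GG_def tr_add)
  have GG_scale: "GG (r *\<^sub>R P) = r *\<^sub>R GG P" for r P by (simp add: GG_def transpose_scalar scaleR_add_right)
  have linA: "linear A"
    unfolding linear_iff A_def
    by (simp add: GG_add GG_scale mat_lin algebra_simps inner_add_right prod_eq_iff)
  have bilB: "bilinear B"
    unfolding bilinear_def linear_iff B_def
    by (simp add: GG_add GG_scale mat_lin algebra_simps inner_add_right inner_add_left prod_eq_iff)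
  obtain K M where KM: "K \<ge> 0"
    "\<And>x y. norm x \<le> 1 \<Longrightarrow> norm y \<le> 1 \<Longrightarrow> norm (g x - g y) \<le> K * norm (x - y)"
    "\<And>x. norm x \<le> 1 \<Longrightarrow> norm (g x) \<le> M"
    using quad_lip[OF linA[THEN linear_conv_bounded_linear[THEN iffD1]]
          bilB[THEN bilinear_conv_bounded_bilinear[THEN iffD1]], of g0]
    unfolding g_def by blast
  obtain \<delta> u where d0: "\<delta> > 0" and u0: "u 0 = 0"
    and ud: "\<And>s. s \<in> {0..\<delta>} \<Longrightarrow> (u has_vector_derivative g (u s)) (at s within {0..\<delta>})"
    using picard[OF KM] by blast
  show ?thesis
  proof (intro exI[of _ \<delta>] conjI allI impI d0, goal_cases)
    case (1 T)
    then have T: "0 < T \<and> T \<le> \<delta>" by simp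
    define y where "y t = u (T - t)" for t
    define Q where "Q t = fst (y t)" for t
    define b where "b t = fst (snd (y t))" for t
    define c where "c t = snd (snd (y t))" for t
    have yQ: "y t = (Q t, b t, c t)" for t by (simp add: Q_def b_def c_def)
    have yd: "(y has_vector_derivative - g (y t)) (at t within {0..T})" if t: "t \<in> {0..T}" for t
    proof -
      have "((\<lambda>t. T - t) has_vector_derivative -1) (at t within {0..T})"
        by (auto intro!: derivative_eq_intros simp: has_real_derivative_iff_has_vector_derivative[symmetric])
      moreover have "(u has_vector_derivative g (u (T - t))) (at (T - t) within (\<lambda>t. T - t) ` {0..T})"
        by (rule has_vector_derivative_within_subset[OF ud]) (use t T in auto)
      ultimately have "((u \<circ> (\<lambda>t. T - t)) has_vector_derivative (-1) *\<^sub>R g (u (T - t))) (at t within {0..T})"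
        by (rule vector_diff_chain_within)
      then show ?thesis by (simp add: y_def[abs_def] o_def)
    qed
    have yfun: "y = (\<lambda>t. (Q t, b t, c t))" using yQ by auto
    have Qd: "(Q has_vector_derivative fst (- g (y t))) (at t within {0..T})" if "t \<in> {0..T}" for t
      using bounded_linear.has_vector_derivative[OF bounded_linear_fst yd[OF that]]
      by (simp add: Q_def[abs_def])
    have bd: "(b has_vector_derivative fst (snd (- g (y t)))) (at t within {0..T})" if "t \<in> {0..T}" for t
      using bounded_linear.has_vector_derivative[OF bounded_linear_compose[OF bounded_linear_fst bounded_linear_snd] yd[OF that]]
      by (simp add: b_def[abs_def])
    have cd: "(c has_vector_derivative snd (snd (- g (y t)))) (at t within {0..T})" if "t \<in> {0..T}" for t
      using bounded_linear.has_vector_derivative[OF bounded_linear_compose[OF bounded_linear_snd bounded_linear_snd] yd[OF that]]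
      by (simp add: c_def[abs_def])
    have yT: "y T = 0" by (simp add: y_def u0)
    have QT: "Q T = 0" "b T = 0" "c T = 0" using yT by (simp_all add: Q_def b_def c_def)
    define ell :: "real^'n \<Rightarrow> (real^'n^'n) \<times> (real^'n) \<times> real \<Rightarrow> real" where
      "ell x z = inner x (fst z *v x) + inner (fst (snd z)) x + snd (snd z)" for x z
    have ell_lin: "bounded_linear (ell x)" for x
      unfolding linear_conv_bounded_linear[symmetric] linear_iff ell_def
      by (simp add: mat_lin algebra_simps inner_add_left inner_add_right)
    define tau :: "(real^'n^'n) \<times> (real^'n) \<times> real \<Rightarrow> real" where
      "tau z = trace (C ** GG (fst z))" for z
    have tau_lin: "bounded_linear tau"
      unfolding linear_conv_bounded_linear[symmetric] linear_iff tau_def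
      by (simp add: GG_add GG_scale mat_lin trace_add trace_def sum.distrib sum_distrib_left)
    have tcont: "continuous_on {0..T} (\<lambda>s. trace (C ** GG (Q s)))"
    proof -
      have "continuous (at t within {0..T}) (\<lambda>s. tau (y s))" if "t \<in> {0..T}" for t
        by (rule has_vector_derivative_continuous[OF bounded_linear.has_vector_derivative[OF tau_lin yd[OF that]]])
      then show ?thesis
        by (simp add: continuous_on_eq_continuous_within tau_def yQ)
    qed
    define s1 where "s1 t = (1/2) * integral {t..T} (\<lambda>s. trace (C ** GG (Q s)))" for t
    have s1d: "(s1 has_vector_derivative - (1/2) * trace (C ** GG (Q t))) (at t within {0..T})"
      if "t \<in> {0..T}" for t
      using bounded_linear.has_vector_derivative[OF bounded_linear_mult_right integral_has_vector_derivative'[OF tcont that], of "1/2"]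
      by (simp add: s1_def[abs_def])
    have S0d: "((\<lambda>s. inner x (Q s *v x) + inner (b s) x + c s) has_vector_derivative ell x (- g (y t))) (at t within {0..T})"
      if "t \<in> {0..T}" for t x
      using bounded_linear.has_vector_derivative[OF ell_lin yd[OF that]]
      by (simp add: ell_def yQ)
    have key: "ell x (- g (P, v, r)) + (\<alpha>/2) * inner (GG P *v x + v) (C *v (GG P *v x + v))
        + \<alpha> * inner (m - L *v x) (GG P *v x + v) + (\<kappa>/2) * inner (m - L *v x) (Ci *v (m - L *v x)) = 0"
      for x P v r
    proof -
      have m1: "fst (- g (P, v, r)) = - ((\<alpha>/2) *\<^sub>R (transpose (GG P) ** C ** GG P) - \<alpha> *\<^sub>R (transpose L ** GG P)
                 + (\<kappa>/2) *\<^sub>R (transpose L ** Ci ** L))"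
        by (simp add: g_def g0_def A_def B_def M0_def algebra_simps)
      have m2: "fst (snd (- g (P, v, r))) = - ((\<alpha>/2) *\<^sub>R (transpose (GG P) *v (C *v v) + transpose (GG P) *v (transpose C *v v))
               + \<alpha> *\<^sub>R (transpose (GG P) *v m - transpose L *v v)
               - (\<kappa>/2) *\<^sub>R (transpose L *v (transpose Ci *v m) + transpose L *v (Ci *v m)))"
        by (simp add: g_def g0_def A_def B_def w0_def algebra_simps del: transpose_matrix_vector)
      have m3: "snd (snd (- g (P, v, r))) = - ((\<alpha>/2) * inner v (C *v v) + \<alpha> * inner m v + (\<kappa>/2) * inner m (Ci *v m))"
        by (simp add: g_def g0_def A_def B_def algebra_simps)
      show ?thesis
        unfolding ell_def m1 m2 m3
        using hj_id[where G="GG P" and C=C and L=L and Ci=Ci and x=x and b=v and m=m and \<alpha>=\<alpha> and \<kappa>=\<kappa>]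
        by simp
    qed
    show ?case
      unfolding Let_def
    proof (intro exI[of _ Q] exI[of _ b] exI[of _ c] conjI ballI allI, goal_cases)
      case (1 t) then show ?case using Qd differentiableI_vector by blast
    next
      case (2 t) then show ?case using bd differentiableI_vector by blast
    next
      case (3 t) then show ?case using cd differentiableI_vector by blast
    next
      case (4 t x)
      have dtv: "dt T (\<lambda>t x. inner x (Q t *v x) + inner (b t) x + c t) t x = ell x (- g (y t))"
        unfolding dt_def by (rule vector_derivative_within_closed_interval[OF _ 4 S0d[OF 4]]) (use T in auto)
      have ax: "a x = m - L *v x" by (simp add: a_def L_def m_def matrix_vector_mult_diff_distrib)
      show ?case
        unfolding dtv grad_quad ax
        using key[of x "Q t" "b t" "c t"]
        by (simp add: yQ \<alpha>_def Ci_def GG_def)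
    next
      case (5 x) then show ?case by (simp add: QT)
    next
      case (6 t x y) then show ?case by (simp add: hess_quad)
    next
      case (7 t x)
      have Sf: "(\<lambda>x. inner x (Q t *v x) + inner (b t) x + c t + s1 t) = (\<lambda>x. inner x (Q t *v x) + inner (b t) x + (c t + s1 t))"
        by (simp add: algebra_simps)
      have dtv0: "dt T (\<lambda>t x. inner x (Q t *v x) + inner (b t) x + c t + s1 t) t x = ell x (- g (y t)) + - (1/2) * trace (C ** GG (Q t))"
        unfolding dt_def
        by (rule vector_derivative_within_closed_interval[OF _ 7 has_vector_derivative_add[OF S0d[OF 7] s1d[OF 7]]])
           (use T in auto)
      have ax: "a x = m - L *v x" by (simp add: a_def L_def m_def matrix_vector_mult_diff_distrib)
      have hs: "(\<lambda>t x. inner x (Q t *v x) + inner (b t) x + c t + 1 / 2 * integral {t..T} (\<lambda>s. trace (C ** hess (\<lambda>x. inner x (Q s *v x) + inner (b s) x + c s) x)))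
              = (\<lambda>t x. inner x (Q t *v x) + inner (b t) x + c t + s1 t)"
        by (simp add: hess_quad s1_def GG_def)
      have k: "ell x (- g (y t)) + ((\<kappa>+1)/2) * inner (GG (Q t) *v x + b t) (C *v (GG (Q t) *v x + b t))
         + (\<kappa>+1) * inner (m - L *v x) (GG (Q t) *v x + b t)
         + (\<kappa>/2) * inner (m - L *v x) (matrix_inv C *v (m - L *v x)) = 0"
        using key[of x "Q t" "b t" "c t"] by (simp add: yQ \<alpha>_def Ci_def)
      have hs1: "1 / 2 * integral {t'..T} (\<lambda>s. trace (C ** (Q s + transpose (Q s)))) = s1 t'" for t'
        by (simp add: s1_def GG_def)
      show ?case
        apply (simp only: hess_quad hs1 ax)
        apply (simp only: Sf grad_quad dtv0 hess_quad)
        using k unfolding GG_def by linarith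
    next
      case (8 x) then show ?case by (simp add: QT)
    qed
  qed
qed

end
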